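(* Let $S_2^*=(-y+x^3-xy^2)\frac{\partial}{\partial x}+(x+x^2y-y^3)\frac{\partial}{\partial y}$ and $H_{2*}(x,y)=\frac{x^2+y^2}{1+2xy}$. For $\epsilon\neq0$ let $\Phi_{2*,\epsilon}(\mathbf{x})=\mathbf{x}+2\epsilon\left(I-\epsilon\,\mathrm{D}S_2^*(\mathbf{x})\right)^{-1}S_2^*(\mathbf{x})$. Let $L_{2*}(x,y)=\left(\frac{x}{\sqrt{1+2xy}},\frac{y}{\sqrt{1+2xy}}\right)$, let $\Phi_{L,\epsilon}(u,v)=\left(\frac{(1-\epsilon^2)u-2\epsilon v}{1+\epsilon^2},\frac{2\epsilon u+(1-\epsilon^2)v}{1+\epsilon^2}\right)$, and let $\widetilde{\Phi}_{2*,\epsilon}=L_{2*}^{-1}\circ\Phi_{L,\epsilon}\circ L_{2*}$, explicitly $$\widetilde{\Phi}_{2*,\epsilon}(x,y)=\left(-\frac{((\epsilon^{2}-1)x+2\epsilon y)\,G}{(\epsilon^{2}+1)\sqrt{2xy+1}},\ \frac{(2\epsilon x+(1-\epsilon^{2})y)\,G}{(\epsilon^{2}+1)\sqrt{2xy+1}}\right),$$ $G=\sqrt{\frac{(2xy+1)(\epsilon^{2}+1)^{2}}{4\epsilon(\epsilon^{2}-1)x^{2}+16\epsilon^{2}xy-4\epsilon(\epsilon^{2}-1)y^{2}+(\epsilon^{2}+1)^{2}}}$. Then: (a) $H_{2*}$ is a first integral of $\Phi_{2*,\epsilon}$, but $S_2^*$ is not a Lie symmetry of $\Phi_{2*,\epsilon}$;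 (b) $H_{2*}$ is a first integral of $\widetilde{\Phi}_{2*,\epsilon}$, and $S_2^*$ is a Lie symmetry of $\widetilde{\Phi}_{2*,\epsilon}$.
   Context: $\mathrm{D}S_2^*$ is the Jacobian matrix of $S_2^*$. $S_2^*$ has an isochronous center at the origin and $L_{2*}$ is a linearization conjugating it near the origin with $-v\frac{\partial}{\partial u}+u\frac{\partial}{\partial v}$; $L_{2*}^{-1}$ is its local inverse. $H$ is a first integral of a map $F$ if $H\circ F=H$; a vector field $X$ is a Lie symmetry of $F$ if $X(F(\mathbf{x}))=DF(\mathbf{x})X(\mathbf{x})$. *)

theory Defs
  imports "HOL-Analysis.Analysis"
begin

definition S2 :: "real^2 \<Rightarrow> real^2" where
  "S2 p = vector [ - (p$2) + (p$1)^3 - (p$1) * (p$2)^2,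
                   (p$1) + (p$1)^2 * (p$2) - (p$2)^3 ]"

definition H2 :: "real^2 \<Rightarrow> real" where
  "H2 p = ((p$1)^2 + (p$2)^2) / (1 + 2 * (p$1) * (p$2))"

definition DS2 :: "real^2 \<Rightarrow> real^2^2" where
  "DS2 p = matrix (frechet_derivative S2 (at p))"

definition Phi2 :: "real \<Rightarrow> real^2 \<Rightarrow> real^2" where
  "Phi2 \<epsilon> p = p + (2 * \<epsilon>) *\<^sub>R (matrix_inv (mat 1 - \<epsilon> *\<^sub>R DS2 p) *v S2 p)"

definition dom_Phi2 :: "real \<Rightarrow> (real^2) set" where
  "dom_Phi2 \<epsilon> = {p. invertible (mat 1 - \<epsilon> *\<^sub>R DS2 p)
      \<and> 1 + 2 * (p$1) * (p$2) \<noteq> 0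
      \<and> 1 + 2 * (Phi2 \<epsilon> p $ 1) * (Phi2 \<epsilon> p $ 2) \<noteq> 0}"

definition G2 :: "real \<Rightarrow> real^2 \<Rightarrow> real" where
  "G2 \<epsilon> p = sqrt ((2 * (p$1) * (p$2) + 1) * (\<epsilon>^2 + 1)^2 /
      (4 * \<epsilon> * (\<epsilon>^2 - 1) * (p$1)^2 + 16 * \<epsilon>^2 * (p$1) * (p$2)
       - 4 * \<epsilon> * (\<epsilon>^2 - 1) * (p$2)^2 + (\<epsilon>^2 + 1)^2))"

text \<open>Explicit form of L2^{-1} o Phi_L o L2.\<close>
definition Phi2t :: "real \<Rightarrow> real^2 \<Rightarrow> real^2" where
  "Phi2t \<epsilon> p = vector [
     - (((\<epsilon>^2 - 1) * (p$1) + 2 * \<epsilon> * (p$2)) * G2 \<epsilon> p)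
         / ((\<epsilon>^2 + 1) * sqrt (2 * (p$1) * (p$2) + 1)),
     ((2 * \<epsilon> * (p$1) + (1 - \<epsilon>^2) * (p$2)) * G2 \<epsilon> p)
         / ((\<epsilon>^2 + 1) * sqrt (2 * (p$1) * (p$2) + 1)) ]"

definition dom_Phi2t :: "real \<Rightarrow> (real^2) set" where
  "dom_Phi2t \<epsilon> = {p. 1 + 2 * (p$1) * (p$2) > 0 \<and>
      4 * \<epsilon> * (\<epsilon>^2 - 1) * (p$1)^2 + 16 * \<epsilon>^2 * (p$1) * (p$2)
       - 4 * \<epsilon> * (\<epsilon>^2 - 1) * (p$2)^2 + (\<epsilon>^2 + 1)^2 > 0}"

definition first_integral :: "'a set \<Rightarrow> ('a \<Rightarrow> 'b) \<Rightarrow> ('a \<Rightarrow> 'a) \<Rightarrow> bool" where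
  "first_integral U H F \<longleftrightarrow> (\<forall>x\<in>U. H (F x) = H x)"

definition lie_symmetry :: "(real^2) set \<Rightarrow> (real^2 \<Rightarrow> real^2) \<Rightarrow> (real^2 \<Rightarrow> real^2) \<Rightarrow> bool" where
  "lie_symmetry U X F \<longleftrightarrow>
     (\<forall>x\<in>U. F differentiable (at x) \<and> X (F x) = matrix (frechet_derivative F (at x)) *v X x)"

end

theory Submission
  imports Defs
begin



lemma hd_nth[derivative_intros]: "((\<lambda>p::real^'n. p $ i) has_derivative (\<lambda>h. h $ i)) F"
  by (rule bounded_linear_imp_has_derivative) (rule bounded_linear_vec_nth)

lemma vector2_eq: "(vector [a, b] :: real^2) = a *\<^sub>R axis 1 1 + b *\<^sub>R axis 2 1"
  by (simp add: vec_eq_iff forall_2 axis_def)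

lemma has_derivative_vector2:
  assumes "(f has_derivative f') F" "(g has_derivative g') F"
  shows "((\<lambda>p. vector [f p, g p] :: real^2) has_derivative (\<lambda>h. vector [f' h, g' h])) F"
  unfolding vector2_eq
  by (intro has_derivative_add has_derivative_scaleR_left assms)

definition S2' :: "real^2 \<Rightarrow> real^2 \<Rightarrow> real^2" where
  "S2' p h = vector [ (3*(p$1)^2 - (p$2)^2) * h$1 + (-1 - 2*(p$1)*(p$2)) * h$2,
                      (1 + 2*(p$1)*(p$2)) * h$1 + ((p$1)^2 - 3*(p$2)^2) * h$2]"

lemma S2_deriv: "(S2 has_derivative S2' p) (at p)"
proof -
  have "S2 = (\<lambda>p. vector [ - (p$2) + (p$1)^3 - (p$1) * (p$2)^2,
                   (p$1) + (p$1)^2 * (p$2) - (p$2)^3 ])" by (simp add: fun_eq_iff S2_def)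
  moreover have "((\<lambda>p. vector [ - (p$2) + (p$1)^3 - (p$1) * (p$2)^2,
                   (p$1) + (p$1)^2 * (p$2) - (p$2)^3 ] :: real^2) has_derivative S2' p) (at p)"
    unfolding S2'_def
    by (rule has_derivative_vector2; (rule derivative_eq_intros refl)+; simp add: fun_eq_iff algebra_simps power2_eq_square power3_eq_cube)
  ultimately show ?thesis by simp
qed

lemma DS2_eq: "DS2 p = (\<chi> i j. S2' p (axis j 1) $ i)"
  unfolding DS2_def matrix_def using frechet_derivative_at[OF S2_deriv] by simp

lemma DS2_entries:
  "DS2 p $ 1 $ 1 = 3*(p$1)^2 - (p$2)^2"  "DS2 p $ 1 $ 2 = -1 - 2*(p$1)*(p$2)"
  "DS2 p $ 2 $ 1 = 1 + 2*(p$1)*(p$2)"  "DS2 p $ 2 $ 2 = (p$1)^2 - 3*(p$2)^2"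
  by (simp_all add: DS2_eq S2'_def axis_def)

definition "s1 x y = - y + x^3 - x * y^2"
definition "s2 x y = x + x^2 * y - y^3"
definition "m11 e x y = 1 - e * (3*x^2 - y^2)"
definition "m12 e x y = e * (1 + 2*x*y)"
definition "m21 e x y = - e * (1 + 2*x*y)"
definition "m22 e x y = 1 - e * (x^2 - 3*y^2)"
definition "dd e x y = m11 e x y * m22 e x y - m12 e x y * m21 e x y"
definition "uu e x y = m22 e x y * s1 x y - m12 e x y * s2 x y"
definition "ww e x y = m11 e x y * s2 x y - m21 e x y * s1 x y"

lemma M_entries:
  fixes p :: "real^2" and e :: real
  defines "M \<equiv> mat 1 - e *\<^sub>R DS2 p"
  shows "M$1$1 = m11 e (p$1) (p$2)" "M$1$2 = m12 e (p$1) (p$2)"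
        "M$2$1 = m21 e (p$1) (p$2)" "M$2$2 = m22 e (p$1) (p$2)"
  by (simp_all add: M_def DS2_entries mat_def m11_def m12_def m21_def m22_def algebra_simps)

lemma det_M: "det (mat 1 - e *\<^sub>R DS2 p) = dd e (p$1) (p$2)"
  by (simp only: det_2 M_entries dd_def)

lemma invertible_M_iff: "invertible (mat 1 - e *\<^sub>R DS2 p) \<longleftrightarrow> dd e (p$1) (p$2) \<noteq> 0"
  by (simp add: invertible_det_nz det_M)

lemma matrix_inv_right: "invertible (A::real^'n^'n) \<Longrightarrow> A ** matrix_inv A = mat 1"
  unfolding invertible_def matrix_inv_def by (metis (mono_tags, lifting) someI_ex)

lemma solve2:
  fixes a b c d w1 w2 r q :: real
  assumes "a*w1 + b*w2 = r" "c*w1 + d*w2 = q" "a*d - b*c \<noteq> 0"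
  shows "w1 = (d * r - b * q)/(a*d - b*c)" "w2 = (a * q - c * r)/(a*d - b*c)"
proof -
  have "(a*d - b*c)*w1 = d*(a*w1 + b*w2) - b*(c*w1 + d*w2)" by (simp add: algebra_simps)
  thus "w1 = (d * r - b * q)/(a*d - b*c)" using assms by (simp add: field_simps)
  have "(a*d - b*c)*w2 = a*(c*w1 + d*w2) - c*(a*w1 + b*w2)" by (simp add: algebra_simps)
  thus "w2 = (a * q - c * r)/(a*d - b*c)" using assms by (simp add: field_simps)
qed

lemma Phi2_explicit:
  assumes "dd e (p$1) (p$2) \<noteq> 0"
  shows "Phi2 e p = vector [p$1 + 2 * e * uu e (p$1) (p$2) / dd e (p$1) (p$2),
                            p$2 + 2 * e * ww e (p$1) (p$2) / dd e (p$1) (p$2)]"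
proof -
  define M where "M = mat 1 - e *\<^sub>R DS2 p"
  define w where "w = matrix_inv M *v S2 p"
  have inv: "invertible M" using assms invertible_M_iff M_def by simp
  have "M *v w = S2 p" unfolding w_def
    by (simp add: matrix_vector_mul_assoc matrix_inv_right[OF inv])
  hence e1: "m11 e (p$1) (p$2) * w$1 + m12 e (p$1) (p$2) * w$2 = s1 (p$1) (p$2)"
    and e2: "m21 e (p$1) (p$2) * w$1 + m22 e (p$1) (p$2) * w$2 = s2 (p$1) (p$2)"
    by (auto simp: vec_eq_iff forall_2 matrix_vector_mult_def sum_2 M_entries[of e p, folded M_def] S2_def s1_def s2_def)
  have w1: "w$1 = uu e (p$1) (p$2) / dd e (p$1) (p$2)" and w2: "w$2 = ww e (p$1) (p$2) / dd e (p$1) (p$2)"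
    using solve2[OF e1 e2 assms[unfolded dd_def]] unfolding uu_def ww_def dd_def by auto
  show ?thesis unfolding Phi2_def
    by (simp add: vec_eq_iff forall_2 w1 w2 flip: w_def M_def)
qed



lemma Hpoly: fixes e x y :: real shows
 "((x * dd e x y + 2*e*uu e x y)^2 + (y * dd e x y + 2*e*ww e x y)^2) * (1 + 2*x*y)
  = (x^2+y^2) * ((dd e x y)^2 + 2*(x * dd e x y + 2*e*uu e x y)*(y * dd e x y + 2*e*ww e x y))"
  unfolding dd_def uu_def ww_def m11_def m12_def m21_def m22_def s1_def s2_def
  by algebra

lemma hq: fixes d D n1 n2 x y :: real
  assumes "d \<noteq> 0" "1 + 2*x*y \<noteq> 0" "1 + 2*(n1/d)*(n2/d) \<noteq> 0"
    "(n1^2 + n2^2) * (1 + 2*x*y) = (x^2+y^2) * (d^2 + 2*n1*n2)"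
  shows "((n1/d)^2 + (n2/d)^2) / (1 + 2*(n1/d)*(n2/d)) = (x^2+y^2)/(1+2*x*y)"
proof -
  have e: "1 + 2*(n1/d)*(n2/d) = (d^2 + 2*n1*n2)/d^2" using assms(1) by (simp add: field_simps power2_eq_square)
  have K: "d^2 + 2*n1*n2 \<noteq> 0" using assms(3) e by auto
  have "((n1/d)^2 + (n2/d)^2) = (n1^2+n2^2)/d^2" by (simp add: power_divide add_divide_distrib)
  hence "((n1/d)^2 + (n2/d)^2) / (1 + 2*(n1/d)*(n2/d)) = (n1^2+n2^2)/(d^2 + 2*n1*n2)"
    unfolding e using assms(1) by simp
  also have "\<dots> = (x^2+y^2)/(1+2*x*y)" using K assms(2,4) by (simp add: frac_eq_eq)
  finally show ?thesis .
qed

lemma Phi2_comp: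
  assumes "dd e (p$1) (p$2) \<noteq> 0"
  shows "Phi2 e p $ 1 = (p$1 * dd e (p$1) (p$2) + 2*e*uu e (p$1) (p$2)) / dd e (p$1) (p$2)"
        "Phi2 e p $ 2 = (p$2 * dd e (p$1) (p$2) + 2*e*ww e (p$1) (p$2)) / dd e (p$1) (p$2)"
  using assms by (simp_all add: Phi2_explicit field_simps)

lemma FI_a: assumes "p \<in> dom_Phi2 e" shows "H2 (Phi2 e p) = H2 p"
proof -
  have d: "dd e (p$1) (p$2) \<noteq> 0" and D: "1 + 2*(p$1)*(p$2) \<noteq> 0"
    and D': "1 + 2 * (Phi2 e p $ 1) * (Phi2 e p $ 2) \<noteq> 0"
    using assms by (auto simp: dom_Phi2_def invertible_M_iff)
  show ?thesis unfolding H2_def Phi2_comp[OF d]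
    by (rule hq[OF d D D'[unfolded Phi2_comp[OF d]] Hpoly])
qed



definition "Qd e x y = 4 * e * (e^2 - 1) * x^2 + 16 * e^2 * x * y - 4 * e * (e^2 - 1) * y^2 + (e^2 + 1)^2"

definition Ft :: "real \<Rightarrow> real^2 \<Rightarrow> real^2" where
  "Ft e p = vector [((1 - e^2) * p$1 + (-2*e)*p$2) / sqrt (Qd e (p$1) (p$2)),
                    (2*e*p$1 + (1 - e^2) * p$2) / sqrt (Qd e (p$1) (p$2))]"

definition "dQ e x y h1 h2 = (8*e*(e^2-1)*x + 16*e^2*y) * h1 + (16*e^2*x - 8*e*(e^2-1)*y) * h2"

definition Ft' :: "real \<Rightarrow> real^2 \<Rightarrow> real^2 \<Rightarrow> real^2" where
  "Ft' e p h = vector [((1 - e^2) * h$1 + (-2*e)*h$2) / sqrt (Qd e (p$1) (p$2))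
         - ((1 - e^2) * p$1 + (-2*e)*p$2) * dQ e (p$1) (p$2) (h$1) (h$2) / (2 * sqrt (Qd e (p$1) (p$2)) * Qd e (p$1) (p$2)),
                      (2*e*h$1 + (1 - e^2) * h$2) / sqrt (Qd e (p$1) (p$2))
         - (2*e*p$1 + (1 - e^2) * p$2) * dQ e (p$1) (p$2) (h$1) (h$2) / (2 * sqrt (Qd e (p$1) (p$2)) * Qd e (p$1) (p$2))]"

lemma open_dom_Phi2t: "open (dom_Phi2t e)"
  unfolding dom_Phi2t_def
  by (intro open_Collect_conj open_Collect_less continuous_intros)

lemma kcancel: fixes K a c q :: real shows "a \<noteq> 0 \<Longrightarrow> c \<noteq> 0 \<Longrightarrow> K * (a * c / q) / (c * a) = K / q"
  by (cases "q = 0") (simp_all add: field_simps)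

lemma Phi2t_eq: assumes "p \<in> dom_Phi2t e" shows "Phi2t e p = Ft e p"
proof -
  let ?x = "p$1" and ?y = "p$2"
  have D: "1 + 2 * ?x * ?y > 0" and Q: "Qd e ?x ?y > 0"
    using assms by (auto simp: dom_Phi2t_def Qd_def)
  have G: "G2 e p = sqrt (2 * ?x * ?y + 1) * (e^2 + 1) / sqrt (Qd e ?x ?y)"
    unfolding G2_def Qd_def[symmetric] by (simp add: real_sqrt_mult real_sqrt_divide)
  have s: "sqrt (2 * ?x * ?y + 1) > 0" using D by (simp add: add.commute)
  have c: "e^2 + 1 > 0" using zero_le_power2[of e] by linarith
  have k: "\<And>K. K * (sqrt (2 * ?x * ?y + 1) * (e^2 + 1) / sqrt (Qd e ?x ?y)) / ((e^2 + 1) * sqrt (2 * ?x * ?y + 1)) = K / sqrt (Qd e ?x ?y)"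
    using s c by (intro kcancel) auto
  have k': "\<And>K. - (K * (sqrt (2 * ?x * ?y + 1) * (e^2 + 1) / sqrt (Qd e ?x ?y))) / ((e^2 + 1) * sqrt (2 * ?x * ?y + 1)) = - K / sqrt (Qd e ?x ?y)"
    using s c by (simp only: minus_divide_left[symmetric] k)
  have "Phi2t e p = vector [ - ((e^2 - 1) * ?x + 2 * e * ?y) / sqrt (Qd e ?x ?y),
       (2 * e * ?x + (1 - e^2) * ?y) / sqrt (Qd e ?x ?y)]"
    unfolding Phi2t_def G k k' ..
  then show ?thesis unfolding Ft_def
    by (simp add: vec_eq_iff forall_2 algebra_simps minus_divide_left)
qed

lemma Qd_deriv[derivative_intros]:
  "((\<lambda>p::real^2. Qd e (p$1) (p$2)) has_derivative (\<lambda>h. dQ e (p$1) (p$2) (h$1) (h$2))) (at p)"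
  unfolding Qd_def dQ_def
  by (rule derivative_eq_intros refl)+ (simp add: fun_eq_iff algebra_simps power2_eq_square)

lemma comp_deriv:
  fixes p :: "real^2" and \<alpha> \<beta> :: real
  assumes "Qd e (p$1) (p$2) > 0"
  shows "((\<lambda>p. (\<alpha> * p$1 + \<beta> * p$2) / sqrt (Qd e (p$1) (p$2))) has_derivative
     (\<lambda>h. (\<alpha> * h$1 + \<beta> * h$2) / sqrt (Qd e (p$1) (p$2))
         - (\<alpha> * p$1 + \<beta> * p$2) * dQ e (p$1) (p$2) (h$1) (h$2) / (2 * sqrt (Qd e (p$1) (p$2)) * Qd e (p$1) (p$2)))) (at p)"
proof -
  have sq: "((\<lambda>p. sqrt (Qd e (p$1) (p$2))) has_derivative
      (\<lambda>h. dQ e (p$1) (p$2) (h$1) (h$2) * (inverse (sqrt (Qd e (p$1) (p$2))) / 2))) (at p)"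
    by (rule DERIV_compose_FDERIV[where g="\<lambda>p. Qd e (p$1) (p$2)", OF DERIV_real_sqrt[OF assms] Qd_deriv])
  have lin: "((\<lambda>p::real^2. \<alpha> * p$1 + \<beta> * p$2) has_derivative (\<lambda>h. \<alpha> * h$1 + \<beta> * h$2)) (at p)"
    by (intro derivative_eq_intros) auto
  have nz: "sqrt (Qd e (p$1) (p$2)) \<noteq> 0" using assms by simp
  have sQ: "sqrt (Qd e (p$1) (p$2)) * sqrt (Qd e (p$1) (p$2)) = Qd e (p$1) (p$2)" using assms by simp
  show ?thesis
    apply (rule has_derivative_eq_rhs[OF has_derivative_divide[OF lin sq nz]])
    using nz assms sQ by (simp add: fun_eq_iff field_simps)
qed

lemma Ft_deriv: assumes "Qd e (p$1) (p$2) > 0" shows "(Ft e has_derivative Ft' e p) (at p)"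
  unfolding Ft_def[abs_def] Ft'_def[abs_def]
  by (rule has_derivative_vector2; rule comp_deriv[OF assms])



lemma poly1: fixes e x y :: real shows
  "2 * (- (2*e*x + (1 - e^2)*y) * Qd e x y + ((1 - e^2)*x + (-2*e)*y)^3 - ((1 - e^2)*x + (-2*e)*y) * (2*e*x + (1 - e^2)*y)^2)
   = 2 * Qd e x y * ((1 - e^2) * s1 x y + (-2*e) * s2 x y) - ((1 - e^2)*x + (-2*e)*y) * dQ e x y (s1 x y) (s2 x y)"
  unfolding Qd_def dQ_def s1_def s2_def by algebra

lemma poly2: fixes e x y :: real shows
  "2 * (((1 - e^2)*x + (-2*e)*y) * Qd e x y + ((1 - e^2)*x + (-2*e)*y)^2 * (2*e*x + (1 - e^2)*y) - (2*e*x + (1 - e^2)*y)^3)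
   = 2 * Qd e x y * (2*e * s1 x y + (1 - e^2) * s2 x y) - (2*e*x + (1 - e^2)*y) * dQ e x y (s1 x y) (s2 x y)"
  unfolding Qd_def dQ_def s1_def s2_def by algebra

lemma lie_generic1:
  fixes s Q A B C dq :: real
  assumes "s > 0" "s * s = Q" "2 * (- B * Q + A^3 - A * B^2) = 2 * Q * C - A * dq"
  shows "- (B / s) + (A/s)^3 - (A/s) * (B/s)^2 = C / s - A * dq / (2 * s * Q)"
proof -
  have Q: "Q > 0" using assms(1,2) by (metis mult_pos_pos)
  have "- (B / s) + (A/s)^3 - (A/s) * (B/s)^2 = (- B * Q + A^3 - A * B^2) / (s * Q)"
    using assms(1,2) Q by (simp add: field_simps power2_eq_square power3_eq_cube)
  also have "\<dots> = (2 * Q * C - A * dq) / (2 * s * Q)"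
    using assms(3) by (simp add: divide_simps)
  also have "\<dots> = C / s - A * dq / (2 * s * Q)" using assms(1) Q by (simp add: field_simps)
  finally show ?thesis .
qed

lemma lie_generic2:
  fixes s Q A B C dq :: real
  assumes "s > 0" "s * s = Q" "2 * (A * Q + A^2 * B - B^3) = 2 * Q * C - B * dq"
  shows "A / s + (A/s)^2 * (B/s) - (B/s)^3 = C / s - B * dq / (2 * s * Q)"
proof -
  have Q: "Q > 0" using assms(1,2) by (metis mult_pos_pos)
  have "A / s + (A/s)^2 * (B/s) - (B/s)^3 = (A * Q + A^2 * B - B^3) / (s * Q)"
    using assms(1,2) Q by (simp add: field_simps power2_eq_square power3_eq_cube)
  also have "\<dots> = (2 * Q * C - B * dq) / (2 * s * Q)"
    using assms(3) by (simp add: divide_simps)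
  also have "\<dots> = C / s - B * dq / (2 * s * Q)" using assms(1) Q by (simp add: field_simps)
  finally show ?thesis .
qed

lemma S2_comp: "S2 q $ 1 = - (q$2) + (q$1)^3 - (q$1) * (q$2)^2" "S2 q $ 2 = (q$1) + (q$1)^2 * (q$2) - (q$2)^3"
  by (simp_all add: S2_def)

lemma Lie_b: assumes "Qd e (p$1) (p$2) > 0"
  shows "S2 (Ft e p) = Ft' e p (S2 p)"
proof -
  let ?x = "p$1" and ?y = "p$2"
  have s: "sqrt (Qd e ?x ?y) > 0" and ss: "sqrt (Qd e ?x ?y) * sqrt (Qd e ?x ?y) = Qd e ?x ?y"
    using assms by simp_all
  have S2p: "S2 p $ 1 = s1 ?x ?y" "S2 p $ 2 = s2 ?x ?y" by (simp_all add: S2_def s1_def s2_def)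
  have c1: "S2 (Ft e p) $ 1 = Ft' e p (S2 p) $ 1"
    unfolding Ft'_def vector_2 S2p unfolding S2_comp Ft_def vector_2
    by (rule lie_generic1[OF s ss poly1])
  have c2: "S2 (Ft e p) $ 2 = Ft' e p (S2 p) $ 2"
    unfolding Ft'_def vector_2 S2p unfolding S2_comp Ft_def vector_2
    by (rule lie_generic2[OF s ss poly2])
  show ?thesis using c1 c2 by (simp add: vec_eq_iff forall_2)
qed



lemma hq2: fixes s Q A B c x y :: real
  assumes "s > 0" "s * s = Q" "Q + 2*A*B = c^2 * (1 + 2*x*y)" "A^2 + B^2 = c^2 * (x^2 + y^2)"
    "c \<noteq> 0" "1 + 2*x*y \<noteq> 0"
  shows "((A/s)^2 + (B/s)^2) / (1 + 2*(A/s)*(B/s)) = (x^2+y^2)/(1+2*x*y)"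
proof -
  have Q: "Q > 0" using assms(1,2) by (metis mult_pos_pos)
  have "((A/s)^2 + (B/s)^2) = (A^2+B^2)/Q" using assms(2) by (simp add: power_divide add_divide_distrib power2_eq_square)
  moreover have "1 + 2*(A/s)*(B/s) = (Q + 2*A*B)/Q" using assms(2) Q by (simp add: field_simps)
  ultimately have "((A/s)^2 + (B/s)^2) / (1 + 2*(A/s)*(B/s)) = (A^2+B^2)/(Q + 2*A*B)"
    using Q by simp
  also have "\<dots> = (x^2+y^2)/(1+2*x*y)" unfolding assms(3,4) using assms(5) by simp
  finally show ?thesis .
qed

lemma FI_b: assumes "p \<in> dom_Phi2t e" shows "H2 (Phi2t e p) = H2 p"
proof -
  let ?x = "p$1" and ?y = "p$2"
  have D: "1 + 2 * ?x * ?y > 0" and Q: "Qd e ?x ?y > 0"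
    using assms by (auto simp: dom_Phi2t_def Qd_def)
  have s: "sqrt (Qd e ?x ?y) > 0" and ss: "sqrt (Qd e ?x ?y) * sqrt (Qd e ?x ?y) = Qd e ?x ?y"
    using Q by simp_all
  have c: "e^2 + 1 \<noteq> 0" using zero_le_power2[of e] by linarith
  have i1: "Qd e ?x ?y + 2*((1 - e^2) * ?x + (-2*e)*?y)*(2*e*?x + (1 - e^2) * ?y) = (e^2+1)^2 * (1 + 2*?x*?y)"
    unfolding Qd_def by algebra
  have i2: "((1 - e^2) * ?x + (-2*e)*?y)^2 + (2*e*?x + (1 - e^2) * ?y)^2 = (e^2+1)^2 * (?x^2 + ?y^2)"
    by algebra
  show ?thesis unfolding Phi2t_eq[OF assms] H2_def unfolding Ft_def vector_2
    by (rule hq2[OF s ss i1 i2 c]) (use D in simp)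
qed

lemma LS_b: "lie_symmetry (dom_Phi2t e) S2 (Phi2t e)"
  unfolding lie_symmetry_def
proof
  fix p assume p: "p \<in> dom_Phi2t e"
  have Q: "Qd e (p$1) (p$2) > 0" using p by (auto simp: dom_Phi2t_def Qd_def)
  have hd: "(Phi2t e has_derivative Ft' e p) (at p)"
    by (rule has_derivative_transform_within_open[OF Ft_deriv[OF Q] open_dom_Phi2t p])
       (simp add: Phi2t_eq)
  have fd: "frechet_derivative (Phi2t e) (at p) = Ft' e p" using frechet_derivative_at[OF hd] by simp
  show "Phi2t e differentiable at p \<and> S2 (Phi2t e p) = matrix (frechet_derivative (Phi2t e) (at p)) *v S2 p"
    using hd unfolding fd
    by (auto simp: differentiable_def matrix_works[OF has_derivative_linear[OF hd, folded linear_matrix_vector_mul_eq]] Phi2t_eq[OF p] Lie_b[OF Q])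
qed



definition p0 :: "real^2" where "p0 = vector [1, 1]"
definition "N1f e x y = x * dd e x y + 2*e*uu e x y"
definition "N2f e x y = y * dd e x y + 2*e*ww e x y"

lemma p0_simps[simp]: "p0 $ 1 = 1" "p0 $ 2 = 1" by (simp_all add: p0_def)

lemma dd_d0: "((\<lambda>p::real^2. dd e (p$1) (p$2)) has_derivative (\<lambda>h. (-8*e+4*e^2) * h$1 + (8*e+4*e^2) * h$2)) (at p0)"
  unfolding dd_def m11_def m12_def m21_def m22_def
  by (rule derivative_eq_intros refl)+ (simp add: fun_eq_iff algebra_simps power2_eq_square)

lemma N1_d0: "((\<lambda>p::real^2. N1f e (p$1) (p$2)) has_derivative (\<lambda>h. (1 - 4*e - e^2) * h$1 + (2*e - 12*e^2) * h$2)) (at p0)"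
  unfolding N1f_def dd_def uu_def s1_def s2_def m11_def m12_def m21_def m22_def
  by (rule derivative_eq_intros refl)+ (simp add: fun_eq_iff algebra_simps power2_eq_square)

lemma N2_d0: "((\<lambda>p::real^2. N2f e (p$1) (p$2)) has_derivative (\<lambda>h. (-2*e - 12*e^2) * h$1 + (1 + 4*e - e^2) * h$2)) (at p0)"
  unfolding N2f_def dd_def ww_def s1_def s2_def m11_def m12_def m21_def m22_def
  by (rule derivative_eq_intros refl)+ (simp add: fun_eq_iff algebra_simps power2_eq_square)

lemma vals: fixes e :: real shows "dd e 1 1 = 1 + 5*e^2" "N1f e 1 1 = 1 - 2*e - 5*e^2" "N2f e 1 1 = 1 + 2*e - 5*e^2"
  unfolding N1f_def N2f_def dd_def uu_def ww_def s1_def s2_def m11_def m12_def m21_def m22_def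
  by (simp_all add: algebra_simps power2_eq_square)

lemma cube_frac1: fixes a b d :: real assumes "d \<noteq> 0"
  shows "- (b/d) + (a/d)^3 - (a/d)*(b/d)^2 = (- b*d^2 + a^3 - a*b^2)/d^3"
  using assms by (simp add: field_simps power2_eq_square power3_eq_cube)

lemma cube_frac2: fixes a b d :: real assumes "d \<noteq> 0"
  shows "(a/d) + (a/d)^2*(b/d) - (b/d)^3 = (a*d^2 + a^2*b - b^3)/d^3"
  using assms by (simp add: field_simps power2_eq_square power3_eq_cube)

lemma final_ineq:
  fixes e :: real assumes "e \<noteq> 0"
  defines "d0 \<equiv> 1 + 5*e^2"
  defines "X \<equiv> (1 - 2*e - 5*e^2) / d0" and "Y \<equiv> (1 + 2*e - 5*e^2) / d0"
  shows "(- Y + X^3 - X*Y^2) + (X + X^2*Y - Y^3) \<noteq>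
     ((-1 + 6*e - 11*e^2) * d0 - (1 - 2*e - 5*e^2) * (16*e)) / d0^2
   + ((1 + 6*e + 11*e^2) * d0 - (1 + 2*e - 5*e^2) * (16*e)) / d0^2"
proof
  assume h: "(- Y + X^3 - X*Y^2) + (X + X^2*Y - Y^3) =
     ((-1 + 6*e - 11*e^2) * d0 - (1 - 2*e - 5*e^2) * (16*e)) / d0^2
   + ((1 + 6*e + 11*e^2) * d0 - (1 + 2*e - 5*e^2) * (16*e)) / d0^2"
  have d0: "d0 > 0" unfolding d0_def using zero_le_power2[of e] by linarith
  have dnz: "d0 \<noteq> 0" using d0 by simp
  define a where "a = 1 - 2*e - 5*e^2"
  define b where "b = 1 + 2*e - 5*e^2"
  define R1 where "R1 = (-1 + 6*e - 11*e^2) * d0 - a * (16*e)"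
  define R2 where "R2 = (1 + 6*e + 11*e^2) * d0 - b * (16*e)"
  have h2: "(- b*d0^2 + a^3 - a*b^2)/d0^3 + (a*d0^2 + a^2*b - b^3)/d0^3 = R1/d0^2 + R2/d0^2"
    using h unfolding X_def Y_def a_def[symmetric] b_def[symmetric] cube_frac1[OF dnz] cube_frac2[OF dnz] R1_def R2_def .
  hence "((- b*d0^2 + a^3 - a*b^2) + (a*d0^2 + a^2*b - b^3))/d0^3 = (R1 + R2)/d0^2"
    by (simp add: add_divide_distrib)
  hence "(- b*d0^2 + a^3 - a*b^2) + (a*d0^2 + a^2*b - b^3) = (R1 + R2) * d0"
    using dnz by (simp add: divide_eq_eq eq_divide_eq power2_eq_square power3_eq_cube)
  moreover have "(- b*d0^2 + a^3 - a*b^2) + (a*d0^2 + a^2*b - b^3) - (R1 + R2) * d0 = -1600 * e^5"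
    unfolding a_def b_def R1_def R2_def d0_def by algebra
  ultimately show False using assms by simp
qed


lemma E_deriv:
  fixes e :: real
  shows "((\<lambda>p. vector [N1f e (p$1) (p$2) / dd e (p$1) (p$2), N2f e (p$1) (p$2) / dd e (p$1) (p$2)] :: real^2)
    has_derivative (\<lambda>h. vector [
      - N1f e (p0$1) (p0$2) * (inverse (dd e (p0$1) (p0$2)) * ((-8*e+4*e^2) * h$1 + (8*e+4*e^2) * h$2) * inverse (dd e (p0$1) (p0$2)))
        + ((1 - 4*e - e^2) * h$1 + (2*e - 12*e^2) * h$2) / dd e (p0$1) (p0$2),
      - N2f e (p0$1) (p0$2) * (inverse (dd e (p0$1) (p0$2)) * ((-8*e+4*e^2) * h$1 + (8*e+4*e^2) * h$2) * inverse (dd e (p0$1) (p0$2)))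
        + ((-2*e - 12*e^2) * h$1 + (1 + 4*e - e^2) * h$2) / dd e (p0$1) (p0$2)])) (at p0)"
proof -
  have nz: "dd e (p0$1) (p0$2) \<noteq> 0" unfolding p0_simps vals
    using zero_le_power2[of e] by linarith
  show ?thesis
    by (rule has_derivative_vector2; rule has_derivative_divide[OF _ dd_d0 nz]; rule N1_d0 N2_d0)
qed

lemma open_dd: "open {p::real^2. dd e (p$1) (p$2) \<noteq> 0}"
  unfolding dd_def m11_def m12_def m21_def m22_def
  by (intro open_Collect_neq continuous_intros)

lemma NL_a:
  fixes e :: real assumes e: "e \<noteq> 0"
  shows "\<not> lie_symmetry (dom_Phi2 e) S2 (Phi2 e)"
proof
  assume ls: "lie_symmetry (dom_Phi2 e) S2 (Phi2 e)"
  define d0 where "d0 = 1 + 5*e^2"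
  define a where "a = 1 - 2*e - 5*e^2"
  define b where "b = 1 + 2*e - 5*e^2"
  have d0: "d0 > 0" unfolding d0_def using zero_le_power2[of e] by linarith
  have ddp0: "dd e (p0$1) (p0$2) = d0" unfolding p0_simps vals d0_def ..
  have Pp0': "Phi2 e p0 $ 1 = N1f e 1 1 / dd e 1 1" "Phi2 e p0 $ 2 = N2f e 1 1 / dd e 1 1"
    using Phi2_comp[of e p0] ddp0 d0 by (simp_all add: N1f_def N2f_def)
  have Pp0: "Phi2 e p0 $ 1 = a / d0" "Phi2 e p0 $ 2 = b / d0"
    using Pp0' unfolding vals a_def b_def d0_def by simp_all
  have p0dom: "p0 \<in> dom_Phi2 e"
  proof -
    have "d0^2 + 2*a*b > 0"
    proof -
      have "d0^2 + 2*a*b = 3 - 18*e^2 + 75*e^4" unfolding d0_def a_def b_def by algebra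
      also have "\<dots> = 3*(1 - 3*e^2)^2 + 48*e^4" by algebra
      also have "\<dots> > 0" using e by (simp add: add_nonneg_pos)
      finally show ?thesis .
    qed
    hence "1 + 2*(a/d0)*(b/d0) \<noteq> 0" using d0 by (simp add: field_simps power2_eq_square)
    then show ?thesis unfolding dom_Phi2_def invertible_M_iff using ddp0 d0 Pp0 by simp
  qed
  define E where "E = (\<lambda>p::real^2. vector [N1f e (p$1) (p$2) / dd e (p$1) (p$2), N2f e (p$1) (p$2) / dd e (p$1) (p$2)] :: real^2)"
  define E' where "E' = (\<lambda>h::real^2. vector [
      - N1f e (p0$1) (p0$2) * (inverse (dd e (p0$1) (p0$2)) * ((-8*e+4*e^2) * h$1 + (8*e+4*e^2) * h$2) * inverse (dd e (p0$1) (p0$2)))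
        + ((1 - 4*e - e^2) * h$1 + (2*e - 12*e^2) * h$2) / dd e (p0$1) (p0$2),
      - N2f e (p0$1) (p0$2) * (inverse (dd e (p0$1) (p0$2)) * ((-8*e+4*e^2) * h$1 + (8*e+4*e^2) * h$2) * inverse (dd e (p0$1) (p0$2)))
        + ((-2*e - 12*e^2) * h$1 + (1 + 4*e - e^2) * h$2) / dd e (p0$1) (p0$2)] :: real^2)"
  have hd: "(Phi2 e has_derivative E') (at p0)"
  proof (rule has_derivative_transform_within_open[OF E_deriv[of e, folded E_def E'_def] open_dd])
    show "p0 \<in> {p::real^2. dd e (p$1) (p$2) \<noteq> 0}" using ddp0 d0 by simp
    fix p :: "real^2" assume "p \<in> {p::real^2. dd e (p$1) (p$2) \<noteq> 0}"
    then show "E p = Phi2 e p" unfolding E_def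
      by (simp add: vec_eq_iff forall_2 Phi2_comp N1f_def N2f_def)
  qed
  have fd: "frechet_derivative (Phi2 e) (at p0) = E'" using frechet_derivative_at[OF hd] by simp
  have "S2 (Phi2 e p0) = matrix (frechet_derivative (Phi2 e) (at p0)) *v S2 p0"
    using ls p0dom unfolding lie_symmetry_def by blast
  hence eq: "S2 (Phi2 e p0) = E' (S2 p0)"
    unfolding fd matrix_works[OF has_derivative_linear[OF hd, folded linear_matrix_vector_mul_eq]] .
  have S2p0: "S2 p0 $ 1 = -1" "S2 p0 $ 2 = 1" by (simp_all add: S2_def)
  have r1: "E' (S2 p0) $ 1 = ((-1 + 6*e - 11*e^2) * d0 - (1 - 2*e - 5*e^2) * (16*e)) / d0^2"
    unfolding E'_def vector_2 S2p0 ddp0 unfolding p0_simps vals d0_def[symmetric]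
    using d0 by (simp add: field_simps power2_eq_square)
  have r2: "E' (S2 p0) $ 2 = ((1 + 6*e + 11*e^2) * d0 - (1 + 2*e - 5*e^2) * (16*e)) / d0^2"
    unfolding E'_def vector_2 S2p0 ddp0 unfolding p0_simps vals d0_def[symmetric]
    using d0 by (simp add: field_simps power2_eq_square)
  have l1: "S2 (Phi2 e p0) $ 1 = - (b/d0) + (a/d0)^3 - (a/d0)*(b/d0)^2" by (simp add: S2_comp Pp0)
  have l2: "S2 (Phi2 e p0) $ 2 = (a/d0) + (a/d0)^2*(b/d0) - (b/d0)^3" by (simp add: S2_comp Pp0)
  have "S2 (Phi2 e p0) $ 1 + S2 (Phi2 e p0) $ 2 = E' (S2 p0) $ 1 + E' (S2 p0) $ 2" using eq by simp
  then show False using final_ineq[OF e] unfolding l1 l2 r1 r2 a_def b_def d0_def by simp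
qed



theorem proposition17:
  fixes \<epsilon> :: real
  assumes "\<epsilon> \<noteq> 0"
  shows "(first_integral (dom_Phi2 \<epsilon>) H2 (Phi2 \<epsilon>) \<and> \<not> lie_symmetry (dom_Phi2 \<epsilon>) S2 (Phi2 \<epsilon>))
       \<and> (first_integral (dom_Phi2t \<epsilon>) H2 (Phi2t \<epsilon>) \<and> lie_symmetry (dom_Phi2t \<epsilon>) S2 (Phi2t \<epsilon>))"
  using FI_a FI_b NL_a[OF assms] LS_b unfolding first_integral_def by blast

end
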